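(* Let $S$ be a group, $A$ a left $S$-act and $I$ a set with $|I|\ge 2$. Then $A^{(\ast)I}$ is geometrically equivalent to $A^{(\ast)2}=A_1\amalg A_2$, where $A_1=A=A_2$.
   Context: A left $S$-act is a nonempty set with an action $S\times A\to A$ satisfying $1a=a$, $(st)a=s(ta)$; homomorphisms preserve the action; $\amalg$ denotes coproduct (disjoint union), and $A^{(\ast)I}=\coprod_{i\in I}A_i$ with each $A_i=A$. For a nonempty finite set $X$, $F_X=\coprod_{x\in X}S_x$ is the free $S$-act on $X$. For an $S$-act $G$ and a relation $T\subseteq F_X\times F_X$, $T'_G=\{\mu:F_X\to G \text{ homomorphism}: T\subseteq\ker\mu\}$ and $T''_G=\bigcap_{\mu\in T'_G}\ker\mu$ (empty intersection $=F_X\times F_X$). $S$-acts $G_1,G_2$ are geometrically equivalent iff $T''_{G_1}=T''_{G_2}$ for all nonempty finite $X$ and all $T\subseteq F_X\times F_X$. *)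

theory Defs
  imports "HOL-Algebra.Group"
begin

definition is_act :: "('g,'m) monoid_scheme \<Rightarrow> 'a set \<Rightarrow> ('g \<Rightarrow> 'a \<Rightarrow> 'a) \<Rightarrow> bool" where
  "is_act S A f \<longleftrightarrow> A \<noteq> {}
     \<and> (\<forall>s\<in>carrier S. \<forall>a\<in>A. f s a \<in> A)
     \<and> (\<forall>a\<in>A. f \<one>\<^bsub>S\<^esub> a = a)
     \<and> (\<forall>s\<in>carrier S. \<forall>t\<in>carrier S. \<forall>a\<in>A. f (s \<otimes>\<^bsub>S\<^esub> t) a = f s (f t a))"

definition act_hom :: "('g,'m) monoid_scheme \<Rightarrow> 'a set \<Rightarrow> ('g \<Rightarrow> 'a \<Rightarrow> 'a)
     \<Rightarrow> 'b set \<Rightarrow> ('g \<Rightarrow> 'b \<Rightarrow> 'b) \<Rightarrow> ('a \<Rightarrow> 'b) \<Rightarrow> bool" where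
  "act_hom S A f B g h \<longleftrightarrow> (\<forall>a\<in>A. h a \<in> B) \<and> (\<forall>s\<in>carrier S. \<forall>a\<in>A. h (f s a) = g s (h a))"

text \<open>Coproduct of copies of A indexed by I: carrier I \<times> A, componentwise action.\<close>
definition copower_carrier :: "'i set \<Rightarrow> 'a set \<Rightarrow> ('i \<times> 'a) set" where
  "copower_carrier I A = I \<times> A"

definition copower_action :: "('g \<Rightarrow> 'a \<Rightarrow> 'a) \<Rightarrow> 'g \<Rightarrow> 'i \<times> 'a \<Rightarrow> 'i \<times> 'a" where
  "copower_action f s p = (fst p, f s (snd p))"

text \<open>Free S-act F_X = coproduct of copies S_x of S (left regular action).\<close>
definition free_carrier :: "('g,'m) monoid_scheme \<Rightarrow> 'x set \<Rightarrow> ('x \<times> 'g) set" where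
  "free_carrier S X = X \<times> carrier S"

definition free_action :: "('g,'m) monoid_scheme \<Rightarrow> 'g \<Rightarrow> 'x \<times> 'g \<Rightarrow> 'x \<times> 'g" where
  "free_action S s p = (fst p, s \<otimes>\<^bsub>S\<^esub> snd p)"

definition hker :: "'a set \<Rightarrow> ('a \<Rightarrow> 'b) \<Rightarrow> ('a \<times> 'a) set" where
  "hker A h = {(u,v). u \<in> A \<and> v \<in> A \<and> h u = h v}"

text \<open>T''_G: intersection of kernels of all homomorphisms F_X \<rightarrow> G whose kernel contains T
  (empty intersection = F_X \<times> F_X).\<close>
definition dclos :: "('g,'m) monoid_scheme \<Rightarrow> 'x set \<Rightarrow> 'b set \<Rightarrow> ('g \<Rightarrow> 'b \<Rightarrow> 'b)
     \<Rightarrow> (('x \<times> 'g) \<times> ('x \<times> 'g)) set \<Rightarrow> (('x \<times> 'g) \<times> ('x \<times> 'g)) set" where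
  "dclos S X G g T =
     {(u,v). u \<in> free_carrier S X \<and> v \<in> free_carrier S X \<and>
        (\<forall>h. act_hom S (free_carrier S X) (free_action S) G g h
              \<and> T \<subseteq> hker (free_carrier S X) h \<longrightarrow> h u = h v)}"

text \<open>Geometric equivalence; finite sets X of variables are taken inside nat.\<close>
definition geom_equiv :: "('g,'m) monoid_scheme \<Rightarrow> 'a set \<Rightarrow> ('g \<Rightarrow> 'a \<Rightarrow> 'a)
     \<Rightarrow> 'b set \<Rightarrow> ('g \<Rightarrow> 'b \<Rightarrow> 'b) \<Rightarrow> bool" where
  "geom_equiv S G1 g1 G2 g2 \<longleftrightarrow>
     (\<forall>X :: nat set. finite X \<longrightarrow> X \<noteq> {} \<longrightarrow>
        (\<forall>T. T \<subseteq> free_carrier S X \<times> free_carrier S X \<longrightarrow>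
             dclos S X G1 g1 T = dclos S X G2 g2 T))"

end

theory Submission
  imports Defs
begin

lemma dclos_sub:
  assumes "\<And>h u v. act_hom S (free_carrier S X) (free_action S) G1 g1 h \<Longrightarrow>
     u \<in> free_carrier S X \<Longrightarrow> v \<in> free_carrier S X \<Longrightarrow>
     \<exists>h'. act_hom S (free_carrier S X) (free_action S) G2 g2 h'
        \<and> hker (free_carrier S X) h \<subseteq> hker (free_carrier S X) h'
        \<and> (h' u = h' v \<longrightarrow> h u = h v)"
  shows "dclos S X G2 g2 T \<subseteq> dclos S X G1 g1 T"
proof
  fix p assume p: "p \<in> dclos S X G2 g2 T"
  obtain u v where uv: "p = (u,v)" by (cases p)
  have u: "u \<in> free_carrier S X" and v: "v \<in> free_carrier S X"
   and H: "\<And>h. act_hom S (free_carrier S X) (free_action S) G2 g2 h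
              \<and> T \<subseteq> hker (free_carrier S X) h \<longrightarrow> h u = h v"
    using p uv unfolding dclos_def by auto
  have "h u = h v" if hh: "act_hom S (free_carrier S X) (free_action S) G1 g1 h"
     "T \<subseteq> hker (free_carrier S X) h" for h
  proof -
    obtain h' where "act_hom S (free_carrier S X) (free_action S) G2 g2 h'"
      "hker (free_carrier S X) h \<subseteq> hker (free_carrier S X) h'"
      "h' u = h' v \<longrightarrow> h u = h v" using assms[OF hh(1) u v] by blast
    with H[of h'] that show ?thesis by blast
  qed
  thus "p \<in> dclos S X G1 g1 T" using u v uv unfolding dclos_def by auto
qed

theorem proposition3p18:
  fixes S :: "('g,'m) monoid_scheme" and A :: "'a set" and act :: "'g \<Rightarrow> 'a \<Rightarrow> 'a"
    and I :: "'i set"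
  assumes "group S"
    and "is_act S A act"
    and "\<exists>i\<in>I. \<exists>j\<in>I. i \<noteq> j"
  shows "geom_equiv S (copower_carrier I A) (copower_action act)
                      (copower_carrier {1::nat, 2} A) (copower_action act)"
proof -
  obtain i j where ij: "i \<in> I" "j \<in> I" "i \<noteq> j" using assms(3) by blast
  have "dclos S X (copower_carrier I A) (copower_action act) T
      = dclos S X (copower_carrier {1::nat, 2} A) (copower_action act) T" for X :: "nat set" and T
  proof
    show "dclos S X (copower_carrier {1::nat, 2} A) (copower_action act) T
       \<subseteq> dclos S X (copower_carrier I A) (copower_action act) T"
    proof (rule dclos_sub)
      fix h u v
      assume h: "act_hom S (free_carrier S X) (free_action S) (copower_carrier I A) (copower_action act) h"
      define k where "k = fst (h u)"
      define h' where "h' = (\<lambda>p. (if fst (h p) = k then 1::nat else 2, snd (h p)))"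
      have "act_hom S (free_carrier S X) (free_action S) (copower_carrier {1::nat, 2} A) (copower_action act) h'"
        using h unfolding act_hom_def h'_def copower_carrier_def copower_action_def by auto
      moreover have "hker (free_carrier S X) h \<subseteq> hker (free_carrier S X) h'"
        unfolding hker_def h'_def by auto
      moreover have "h' u = h' v \<longrightarrow> h u = h v"
        unfolding h'_def k_def by (auto split: if_splits simp: prod_eq_iff)
      ultimately show "\<exists>h'. act_hom S (free_carrier S X) (free_action S) (copower_carrier {1::nat, 2} A) (copower_action act) h'
        \<and> hker (free_carrier S X) h \<subseteq> hker (free_carrier S X) h' \<and> (h' u = h' v \<longrightarrow> h u = h v)"
        by blast
    qed
  next
    show "dclos S X (copower_carrier I A) (copower_action act) T
       \<subseteq> dclos S X (copower_carrier {1::nat, 2} A) (copower_action act) T"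
    proof (rule dclos_sub)
      fix h u v
      assume h: "act_hom S (free_carrier S X) (free_action S) (copower_carrier {1::nat, 2} A) (copower_action act) h"
        and u: "u \<in> free_carrier S X" and v: "v \<in> free_carrier S X"
      define h' where "h' = (\<lambda>p. (if fst (h p) = 1 then i else j, snd (h p)))"
      have "act_hom S (free_carrier S X) (free_action S) (copower_carrier I A) (copower_action act) h'"
        using h ij unfolding act_hom_def h'_def copower_carrier_def copower_action_def by auto
      moreover have "hker (free_carrier S X) h \<subseteq> hker (free_carrier S X) h'"
        unfolding hker_def h'_def by auto
      moreover have "h u \<in> copower_carrier {1::nat, 2} A" "h v \<in> copower_carrier {1::nat, 2} A"
        using h u v unfolding act_hom_def by auto
      hence "h' u = h' v \<longrightarrow> h u = h v"
        using ij unfolding h'_def copower_carrier_def by (auto split: if_splits simp: prod_eq_iff)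
      ultimately show "\<exists>h'. act_hom S (free_carrier S X) (free_action S) (copower_carrier I A) (copower_action act) h'
        \<and> hker (free_carrier S X) h \<subseteq> hker (free_carrier S X) h' \<and> (h' u = h' v \<longrightarrow> h u = h v)"
        by blast
    qed
  qed
  thus ?thesis unfolding geom_equiv_def by blast
qed

end
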